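(* Let $n$ be a prime, let $\alpha$ be a primitive element of $\mathbb{F}_{2^n}$, identify $\mathbb{F}_2^n$ with $\mathbb{F}_{2^n}$ as $\mathbb{F}_2$-vector spaces, and let $k\ge 2$. If there exist $\frac{2^n-2}{(2^k-1)(2^k-2)n}$ pairwise disjoint coset complete $k$-dimensional subspaces of $\mathbb{F}_2^n$, then there exists a Steiner structure $\mathbb{S}_2[2,k,n]$.
   Context: For $s\in\mathbb{Z}_{2^n-1}$, the cyclotomic coset of $s$ is $C_s=\{s\cdot 2^i \bmod (2^n-1): 0\le i\le n-1\}$, and $\rho(s)$ denotes the smallest element of $C_s$ (its coset representative). For a $k$-dimensional subspace $X=\{0,\alpha^{i_1},\dots,\alpha^{i_{2^k-1}}\}$ of $\mathbb{F}_2^n$ (exponents in $\mathbb{Z}_{2^n-1}$), its coset difference set is $\rho(\Delta(X))=\{\rho(i_r-i_s): 1\le r,s\le 2^k-1,\ r\ne s\}$. $X$ is coset complete if $|\rho(\Delta(X))|=(2^k-1)(2^k-2)$; two coset complete subspaces $X,Y$ are disjoint coset complete if $\rho(\Delta(X))\cap\rho(\Delta(Y))=\varnothing$. A Steiner structure $\mathbb{S}_2[2,k,n]$ is a set of $k$-dimensional subspaces of $\mathbb{F}_2^n$ such that each $2$-dimensional subspace of $\mathbb{F}_2^n$ is contained in exactly one of them. *)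

theory Defs
  imports "HOL-Computational_Algebra.Primes" "HOL-Library.Cardinality"
begin

text \<open>The field F_{2^n} is modelled by a finite field type 'a with CARD('a) = 2^n and
characteristic 2. Viewed as an F_2-vector space, its subspaces are exactly the
subsets containing 0 and closed under addition; a subspace has F_2-dimension k
iff it has 2^k elements.\<close>

definition F2_subspace :: "'a::field set \<Rightarrow> bool" where
  "F2_subspace V \<longleftrightarrow> 0 \<in> V \<and> (\<forall>x\<in>V. \<forall>y\<in>V. x + y \<in> V)"

definition F2_subspace_dim :: "'a::field set \<Rightarrow> nat \<Rightarrow> bool" where
  "F2_subspace_dim V k \<longleftrightarrow> F2_subspace V \<and> finite V \<and> card V = 2 ^ k"

definition primitive_element :: "'a::field \<Rightarrow> bool" where
  "primitive_element \<alpha> \<longleftrightarrow> \<alpha> \<noteq> 0 \<and> (\<forall>x. x \<noteq> 0 \<longrightarrow> (\<exists>i::nat. \<alpha> ^ i = x))"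

definition dlog :: "nat \<Rightarrow> 'a::field \<Rightarrow> 'a \<Rightarrow> nat" where
  "dlog n \<alpha> x = (THE i. i < 2 ^ n - 1 \<and> \<alpha> ^ i = x)"

definition coset_rep :: "nat \<Rightarrow> nat \<Rightarrow> nat" where
  "coset_rep n s = Min {(s * 2 ^ i) mod (2 ^ n - 1) | i. i < n}"

definition coset_diff_set :: "nat \<Rightarrow> 'a::field \<Rightarrow> 'a set \<Rightarrow> nat set" where
  "coset_diff_set n \<alpha> X =
     {coset_rep n (nat ((int (dlog n \<alpha> a) - int (dlog n \<alpha> b)) mod int (2 ^ n - 1))) | a b.
        a \<in> X \<and> b \<in> X \<and> a \<noteq> 0 \<and> b \<noteq> 0 \<and> a \<noteq> b}"

definition coset_complete :: "nat \<Rightarrow> 'a::field \<Rightarrow> nat \<Rightarrow> 'a set \<Rightarrow> bool" where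
  "coset_complete n \<alpha> k X \<longleftrightarrow> card (coset_diff_set n \<alpha> X) = (2 ^ k - 1) * (2 ^ k - 2)"

definition steiner_structure :: "nat \<Rightarrow> 'a::field set set \<Rightarrow> bool" where
  "steiner_structure k S \<longleftrightarrow> (\<forall>X\<in>S. F2_subspace_dim X k) \<and>
     (\<forall>W. F2_subspace_dim W 2 \<longrightarrow> (\<exists>!X. X \<in> S \<and> W \<subseteq> X))"

end

theory Submission
  imports Defs
begin



lemma pow2_mod:
  assumes "n > 0"
  shows "(s * 2^a) mod (2^n - 1) = (s * 2^(a mod n)) mod ((2::nat)^n - 1)"
proof -
  let ?N = "(2::nat)^n - 1"
  have c: "2^n mod ?N = 1 mod ?N"
  proof -
    have "(2::nat)^n = ?N + 1" by simp
    thus ?thesis by (metis mod_add_self1 add.commute)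
  qed
  have c2: "(2^n)^q mod ?N = 1 mod ?N" for q
    by (metis c power_mod power_one)
  have e: "s * 2^a = s * 2^(a mod n) * (2^n)^(a div n)"
    by (metis mod_div_mult_eq mult.assoc mult.commute power_add power_mult)
  have "(s * 2^a) mod ?N = (s * 2^(a mod n) * ((2^n)^(a div n) mod ?N)) mod ?N"
    unfolding e by (rule mod_mult_right_eq[symmetric])
  also have "\<dots> = (s * 2^(a mod n) * (1 mod ?N)) mod ?N" unfolding c2 ..
  also have "\<dots> = (s * 2^(a mod n)) mod ?N" by (metis mod_mult_right_eq mult_1_right)
  finally show ?thesis .
qed

definition cs :: "nat \<Rightarrow> nat \<Rightarrow> nat set" where
  "cs n s = {(s * 2 ^ i) mod (2 ^ n - 1) | i. i < n}"

lemma cs_all: "n > 0 \<Longrightarrow> cs n s = {(s * 2 ^ i) mod (2 ^ n - 1) | i. True}"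
  unfolding cs_def using pow2_mod[of n s] by (auto intro: exI[of _ "_ mod n"])

lemma cs_shift:
  assumes "n > 0"
  shows "cs n ((s * 2^j) mod (2^n - 1)) = cs n s"
proof -
  have e: "((s * 2^j) mod (2^n - 1) * 2^i) mod (2^n-1) = (s * 2^(j+i)) mod (2^n-1)" for i
    by (simp add: mod_mult_left_eq power_add mult.assoc)
  show ?thesis
  proof
    show "cs n ((s * 2^j) mod (2^n - 1)) \<subseteq> cs n s"
      unfolding cs_all[OF assms] e by auto
    show "cs n s \<subseteq> cs n ((s * 2^j) mod (2^n - 1))"
    proof
      fix x assume "x \<in> cs n s"
      then obtain i where x: "x = (s * 2^i) mod (2^n-1)" unfolding cs_all[OF assms] by auto
      have j: "j \<le> n * j" using assms by simp
      have j': "j \<le> j*n" using j by (simp add: mult.commute)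
      have jj: "j + (n*j + i - j) = i + j * n" unfolding mult.commute[of n j] using j' by linarith
      have "x = (s * 2^(j + (n*j + i - j))) mod (2^n-1)"
        unfolding x jj
        by (subst pow2_mod[OF assms], subst (2) pow2_mod[OF assms]) simp
      thus "x \<in> cs n ((s * 2^j) mod (2^n - 1))"
        unfolding cs_all[OF assms] e by blast
    qed
  qed
qed

lemma rep_shift: "n > 0 \<Longrightarrow> coset_rep n ((s * 2^j) mod (2^n - 1)) = coset_rep n s"
  using cs_shift[of n s j] unfolding coset_rep_def cs_def[symmetric] by simp

lemma gcd_closed:
  fixes P :: "nat \<Rightarrow> bool"
  assumes cl: "\<And>a b. b \<le> a \<Longrightarrow> P a \<Longrightarrow> P b \<Longrightarrow> P (a - b)"
  shows "P a \<Longrightarrow> P b \<Longrightarrow> P (gcd a b)"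
proof (induction "a + b" arbitrary: a b rule: less_induct)
  case less
  show ?case
  proof (cases "a = 0 \<or> b = 0")
    case True thus ?thesis using less.prems by auto
  next
    case False
    show ?thesis
    proof (cases "b \<le> a")
      case True
      have "P (a - b)" using cl[OF True less.prems] .
      hence "P (gcd (a - b) b)" using less.prems(2) False True by (intro less.hyps) auto
      moreover have "gcd (a - b) b = gcd a b" using True by (rule gcd_diff1_nat)
      ultimately show ?thesis by simp
    next
      case f2: False
      have ab: "a \<le> b" using f2 by simp
      have "P (b - a)" using cl[where a=b and b=a, OF ab less.prems(2) less.prems(1)] .
      hence "P (gcd (b - a) a)" using less.prems(1) False f2 by (intro less.hyps) auto
      moreover have "gcd (b - a) a = gcd b a" using f2 by (intro gcd_diff1_nat) simp
      ultimately show ?thesis by (simp add: gcd.commute[of b a])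
    qed
  qed
qed

lemma s1: fixes E :: nat assumes n0: "n > 0" and t: "t < n"
  and h: "(E * 2^n) mod (2^n - 1) = (E * 2^(t + n)) mod (2^n - 1)"
  shows "(E * 2^0) mod (2^n - 1) = (E * 2^t) mod ((2::nat)^n - 1)"
proof -
  have a: "(E * 2^n) mod (2^n - 1) = (E * 2^0) mod ((2::nat)^n - 1)"
    using pow2_mod[OF n0, of E n] by simp
  have b: "(E * 2^(t+n)) mod (2^n - 1) = (E * 2^t) mod ((2::nat)^n - 1)"
    using pow2_mod[OF n0, of E "t+n"] t by simp
  show ?thesis using h unfolding a b .
qed

lemma s2: fixes E :: nat assumes "(E * 2^0) mod N = (E * 2^t) mod N"
  shows "N dvd E * (2^t - 1)"
proof -
  have le: "E \<le> E * 2^t" by simp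
  have "(E * 2^t) mod N = E mod N" using assms by simp
  hence "N dvd E * 2^t - E" using mod_eq_dvd_iff_nat[OF le] by simp
  thus ?thesis by (simp add: right_diff_distrib')
qed

lemma aux_arith: "(E::nat) * (Suc u * Suc v - 1) = Suc u * (E * (Suc v - 1)) + E * (Suc u - 1)"
proof -
  have "Suc u * Suc v - 1 = u * v + u + v" by simp
  thus ?thesis by (simp add: distrib_left distrib_right)
qed
lemma s3: fixes E N :: nat assumes "b \<le> a" "N dvd E * (2^a - 1)" "N dvd E * (2^b - 1)"
  shows "N dvd E * (2^(a-b) - 1)"
proof -
  obtain u where u: "(2::nat)^(a-b) = Suc u" using gr0_implies_Suc[of "(2::nat)^(a-b)"] by auto
  obtain v where v: "(2::nat)^b = Suc v" using gr0_implies_Suc[of "(2::nat)^b"] by auto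
  have "(2::nat)^a = 2^(a-b) * 2^b" using assms(1) by (simp add: power_add[symmetric])
  hence a: "(2::nat)^a = Suc u * Suc v" unfolding u v .
  have eq: "E * (2^a - 1) = 2^(a-b) * (E * (2^b - 1)) + E * (2^(a-b) - 1)"
    unfolding a u v by (rule aux_arith)
  have d1: "N dvd 2^(a-b) * (E * (2^b - 1))" using assms(3) by (rule dvd_mult)
  have "N dvd 2^(a-b) * (E * (2^b - 1)) + E * (2^(a-b) - 1)" using assms(2) unfolding eq .
  thus ?thesis using dvd_add_right_iff[OF d1] by blast
qed
lemma e1: "j \<le> n \<Longrightarrow> (E::nat)*2^j*2^(n-j) = E*2^n"
  by (simp add: mult.assoc power_add[symmetric])
lemma e2: "j < j' \<Longrightarrow> j' < n \<Longrightarrow> (E::nat)*2^j'*2^(n-j) = E*2^((j'-j)+n)"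
  by (simp add: mult.assoc power_add[symmetric])

lemma gcd_dvd_pow:
  fixes N E :: nat assumes "N dvd E*(2^a - 1)" "N dvd E*(2^b - 1)"
  shows "N dvd E*(2^(gcd a b) - 1)"
proof (rule gcd_closed[of "\<lambda>a. N dvd E*(2^a - 1)"])
  fix a b :: nat assume "b \<le> a" "N dvd E*(2^a - 1)" "N dvd E*(2^b - 1)"
  thus "N dvd E*(2^(a - b) - 1)" by (rule s3)
next
  show "N dvd E*(2^a - 1)" by (rule assms(1))
next
  show "N dvd E*(2^b - 1)" by (rule assms(2))
qed

lemma shift_inj:
  assumes p: "prime n" and E: "E mod (2^n - 1) \<noteq> 0" and j: "j < n" "j' < n"
    and eq: "(E * 2^j) mod (2^n - 1) = (E * 2^j') mod ((2::nat)^n - 1)"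
  shows "j = j'"
proof (rule ccontr)
  assume ne: "j \<noteq> j'"
  have n0: "n > 0" using p prime_gt_0_nat by blast
  let ?N = "(2::nat)^n - 1"
  have main: "False" if jj: "j < j'" "j' < n" and eq: "(E * 2^j) mod ?N = (E * 2^j') mod ?N" for j j'
  proof -
    define t where "t = j' - j"
    have t: "0 < t" "t < n" using jj unfolding t_def by auto
    have "(E*2^j*2^(n-j)) mod ?N = ((E*2^j) mod ?N * 2^(n-j)) mod ?N" by (rule mod_mult_left_eq[symmetric])
    also have "\<dots> = ((E*2^j') mod ?N * 2^(n-j)) mod ?N" by (simp only: eq)
    also have "\<dots> = (E*2^j'*2^(n-j)) mod ?N" by (rule mod_mult_left_eq)
    finally have e0: "(E*2^j*2^(n-j)) mod ?N = (E*2^j'*2^(n-j)) mod ?N" .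
    have e1: "E*2^j*2^(n-j) = E*2^n" using jj by (intro e1) simp
    have e2: "E*2^j'*2^(n-j) = E*2^(t+n)" using jj unfolding t_def by (intro e2)
    have "(E * 2^n) mod ?N = (E * 2^(t + n)) mod ?N" using e0 unfolding e1 e2 .
    hence "(E * 2^0) mod ?N = (E * 2^t) mod ?N" by (rule s1[OF n0 t(2)])
    hence P1: "?N dvd E * (2^t - 1)" by (rule s2)
    have P2: "?N dvd E * (2^n - 1)" by (rule dvd_triv_right)
    have G: "?N dvd E * (2^(gcd t n) - 1)"
      by (rule gcd_dvd_pow[OF P1 P2])
    have g1: "gcd t n = 1"
    proof -
      have "\<not> n dvd t" using t by (simp add: nat_dvd_not_less)
      hence "coprime n t" by (rule prime_imp_coprime[OF p])
      hence "coprime t n" by (rule coprime_commute[THEN iffD1])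
      thus ?thesis by (rule coprime_iff_gcd_eq_1[THEN iffD1])
    qed
    have o: "(2::nat)^1 - 1 = 1" by simp
    have "?N dvd E" using G unfolding g1 o mult_1_right .
    hence "E mod ?N = 0" by (rule dvd_imp_mod_0)
    thus False using E by blast
  qed
  show False
  proof (cases "j < j'")
    case True show ?thesis by (rule main[of j j', OF True j(2) eq])
  next
    case False hence "j' < j" using ne by simp
    thus ?thesis by (rule main[of j' j, OF _ j(1) eq[symmetric]])
  qed
qed




lemma two0: "(1::'a::field)+1 = 0 \<Longrightarrow> (2::'a) = 0"
  by (metis one_add_one)

lemma add_self: assumes "(1::'a::field)+1 = 0" shows "(c::'a) + c = 0"
proof -
  have "c + c = 2 * c" by (rule mult_2[symmetric])
  thus ?thesis using two0[OF assms] by simp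
qed

lemma frob2: assumes "(1::'a::field)+1 = 0" shows "((a::'a)+b)^2 = a^2+b^2"
  using two0[OF assms] by (simp add: power2_sum)

lemma frob: assumes "(1::'a::field)+1 = 0" shows "((a::'a)+b)^(2^j) = a^(2^j)+b^(2^j)"
proof (induction j)
  case 0 thus ?case by simp
next
  case (Suc j)
  have "(a+b)^(2^Suc j) = ((a+b)^(2^j))^2" by (simp only: power_Suc2 power_mult)
  also have "\<dots> = (a^(2^j))^2 + (b^(2^j))^2" unfolding Suc by (rule frob2[OF assms])
  also have "\<dots> = a^(2^Suc j) + b^(2^Suc j)" by (simp only: power_Suc2 power_mult)
  finally show ?case .
qed

lemma frob_inj: assumes "(1::'a::field)+1 = 0" "(a::'a)^(2^j) = b^(2^j)" shows "a = b"
proof -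
  have "(a+b)^(2^j) = 0" unfolding frob[OF assms(1)] assms(2) by (rule add_self[OF assms(1)])
  hence "a + b = 0" by simp
  hence "a = - b" by (simp add: eq_neg_iff_add_eq_0)
  also have "- b = b" using eq_neg_iff_add_eq_0[of b b] add_self[OF assms(1), of b] by simp
  finally show ?thesis .
qed

lemma prim_order:
  fixes \<alpha> :: "'a::{field,finite}"
  assumes prim: "primitive_element \<alpha>"
  shows "\<alpha>^u = \<alpha>^v \<longleftrightarrow> u mod (CARD('a) - 1) = v mod (CARD('a) - 1)"
    and "inj_on (\<lambda>i. \<alpha>^i) {..<CARD('a) - 1}"
    and "(\<lambda>i. \<alpha>^i) ` {..<CARD('a) - 1} = UNIV - {0}"
proof -
  let ?M = "CARD('a) - 1"
  let ?f = "\<lambda>i::nat. \<alpha>^i"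
  have a0: "\<alpha> \<noteq> 0" using prim unfolding primitive_element_def by blast
  have cardM: "card (UNIV - {0::'a}) = ?M" by (simp add: card_Diff_singleton)
  have sub: "?f ` A \<subseteq> UNIV - {0}" for A using a0 by auto
  have "\<exists>p. 0 < p \<and> p \<le> ?M \<and> \<alpha>^p = 1"
  proof -
    have "card (?f ` {..?M}) \<le> ?M" using card_mono[OF _ sub[of "{..?M}"]] cardM by simp
    moreover have "0 < CARD('a)" by (rule finite_UNIV_card_ge_0) simp
    ultimately have "card (?f ` {..?M}) < card {..?M}" unfolding card_atMost by linarith
    hence "\<not> inj_on ?f {..?M}" by (rule pigeonhole)
    then obtain i j where ij: "i \<le> ?M" "j \<le> ?M" "i \<noteq> j" "\<alpha>^i = \<alpha>^j"
      unfolding inj_on_def by auto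
    have key: "\<alpha>^(b - a) = 1" if "a < b" "\<alpha>^a = \<alpha>^b" for a b
    proof -
      have "\<alpha>^a * \<alpha>^(b-a) = \<alpha>^b" using that(1) by (simp add: power_add[symmetric])
      hence "\<alpha>^a * \<alpha>^(b-a) = \<alpha>^a * 1" using that(2) by simp
      thus ?thesis using a0 by simp
    qed
    show ?thesis
    proof (cases "i < j")
      case True thus ?thesis using key[of i j] ij by (intro exI[of _ "j - i"]) auto
    next
      case False hence "j < i" using ij by simp
      thus ?thesis using key[of j i] ij by (intro exI[of _ "i - j"]) auto
    qed
  qed
  then obtain p where p: "0 < p" "p \<le> ?M" "\<alpha>^p = 1" by blast
  have red: "\<alpha>^i = \<alpha>^(i mod p)" for i
  proof -
    have "\<alpha>^i = \<alpha>^(p * (i div p) + i mod p)" by simp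
    also have "\<dots> = (\<alpha>^p)^(i div p) * \<alpha>^(i mod p)" by (simp only: power_add power_mult)
    finally show ?thesis using p(3) by simp
  qed
  have cov: "UNIV - {0} \<subseteq> ?f ` {..<p}"
  proof
    fix x :: 'a assume "x \<in> UNIV - {0}"
    then obtain i where "\<alpha>^i = x" using prim unfolding primitive_element_def by auto
    hence "x = ?f (i mod p)" using red by simp
    moreover have "i mod p < p" using p(1) by simp
    ultimately show "x \<in> ?f ` {..<p}" by blast
  qed
  have "?M \<le> card (?f ` {..<p})" using card_mono[OF _ cov] cardM by simp
  also have "\<dots> \<le> p" using card_image_le[of "{..<p}" ?f] by simp
  finally have pM: "p = ?M" using p(2) by simp
  show img: "?f ` {..<?M} = UNIV - {0}" using cov sub pM by blast
  have ci: "card (?f ` {..<?M}) = card {..<?M}" unfolding img cardM by simp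
  show inj: "inj_on ?f {..<?M}"
    by (rule eq_card_imp_inj_on[OF _ ci]) simp
  have redM: "\<alpha>^i = \<alpha>^(i mod ?M)" for i using red pM by simp
  have M0: "?M > 0" using p by simp
  show "\<alpha>^u = \<alpha>^v \<longleftrightarrow> u mod ?M = v mod ?M"
  proof
    assume "\<alpha>^u = \<alpha>^v"
    hence "?f (u mod ?M) = ?f (v mod ?M)" using redM by metis
    thus "u mod ?M = v mod ?M" using inj_onD[OF inj] M0 by simp
  next
    assume "u mod ?M = v mod ?M"
    thus "\<alpha>^u = \<alpha>^v" using redM by metis
  qed
qed




lemma dlog_pow:
  fixes \<alpha> :: "'a::{field,finite}"
  assumes prim: "primitive_element \<alpha>" and cardA: "CARD('a) = 2^n" and N: "N = 2^n - 1" and N0: "N > 0"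
  shows "dlog n \<alpha> (\<alpha>^u) = u mod N"
proof -
  have M: "CARD('a) - 1 = N" using cardA N by simp
  note po = prim_order[OF prim, unfolded M]
  show ?thesis unfolding dlog_def N[symmetric]
  proof (rule the_equality)
    show "u mod N < N \<and> \<alpha>^(u mod N) = \<alpha>^u" using N0 po(1) by simp
  next
    fix i assume "i < N \<and> \<alpha>^i = \<alpha>^u"
    thus "i = u mod N" using po(1)[of i u] by (metis mod_less)
  qed
qed

lemma dlog_nz:
  fixes \<alpha> :: "'a::{field,finite}"
  assumes prim: "primitive_element \<alpha>" and cardA: "CARD('a) = 2^n" and N: "N = 2^n - 1" and N0: "N > 0"
    and x: "x \<noteq> 0"
  shows "\<alpha>^(dlog n \<alpha> x) = x" "dlog n \<alpha> x < N"
proof -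
  obtain i where i: "\<alpha>^i = x" using prim x unfolding primitive_element_def by auto
  have M: "CARD('a) - 1 = N" using cardA N by simp
  note po = prim_order[OF prim, unfolded M]
  have d: "dlog n \<alpha> x = i mod N" using dlog_pow[OF prim cardA N N0, of i] i by simp
  show "\<alpha>^(dlog n \<alpha> x) = x" unfolding d using po(1)[of "i mod N" i] i by simp
  show "dlog n \<alpha> x < N" unfolding d using N0 by simp
qed

lemma pow_eq_int:
  fixes \<alpha> :: "'a::{field,finite}"
  assumes prim: "primitive_element \<alpha>" and M: "CARD('a) - 1 = N"
    and "int u mod int N = int v mod int N"
  shows "\<alpha>^u = \<alpha>^v"
proof -
  have "int (u mod N) = int (v mod N)" using assms(3) by (simp add: zmod_int)
  hence "u mod N = v mod N" by (simp only: of_nat_eq_iff)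
  thus ?thesis using prim_order(1)[OF prim] M by simp
qed

lemma W_decomp:
  fixes W :: "'a::field set"
  assumes char2: "(1::'a)+1 = 0" and W: "F2_subspace_dim W 2"
  shows "\<exists>x y. x \<in> W \<and> y \<in> W \<and> x \<noteq> 0 \<and> y \<noteq> 0 \<and> x \<noteq> y \<and>
     (\<forall>Y. F2_subspace Y \<longrightarrow> x \<in> Y \<longrightarrow> y \<in> Y \<longrightarrow> W \<subseteq> Y)"
proof -
  have W0: "0 \<in> W" and Wc: "\<And>a b. a \<in> W \<Longrightarrow> b \<in> W \<Longrightarrow> a + b \<in> W" and fin: "finite W"
    and c4: "card W = 4"
    using W unfolding F2_subspace_dim_def F2_subspace_def by auto
  have "card (W - {0}) = 3" using c4 W0 fin by (simp add: card_Diff_singleton)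
  hence "W - {0} \<noteq> {}" by (metis card.empty zero_neq_numeral)
  then obtain x where x: "x \<in> W" "x \<noteq> 0" by auto
  have "card (W - {0} - {x}) = 2" using \<open>card (W - {0}) = 3\<close> x fin by (simp add: card_Diff_singleton)
  hence "W - {0} - {x} \<noteq> {}" by (metis card.empty zero_neq_numeral)
  then obtain y where y: "y \<in> W" "y \<noteq> 0" "y \<noteq> x" by auto
  have xy: "x + y \<noteq> 0"
  proof
    assume "x + y = 0"
    hence "x = - y" by (simp add: eq_neg_iff_add_eq_0)
    also have "- y = y" using eq_neg_iff_add_eq_0[of y y] add_self[OF char2, of y] by simp
    finally show False using y by simp
  qed
  have xy1: "x + y \<noteq> x" using y by simp
  have xy2: "x + y \<noteq> y" using x by simp
  have sub: "{0, x, y, x + y} \<subseteq> W" using W0 x y Wc by auto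
  have "card {0, x, y, x + y} = 4" using x y xy xy1 xy2 by auto
  hence eqW: "{0, x, y, x + y} = W" using card_subset_eq[OF fin sub] c4 by simp
  show ?thesis
  proof (intro exI conjI allI impI)
    fix Y assume "F2_subspace Y" "x \<in> Y" "y \<in> Y"
    thus "W \<subseteq> Y" unfolding eqW[symmetric] F2_subspace_def by auto
  qed (use x y in auto)
qed

lemma card_pairs:
  fixes X :: "'a set"
  assumes fin: "finite X" and c: "card (X - {z}) = m"
  shows "card {(a,b). a \<in> X \<and> b \<in> X \<and> a \<noteq> z \<and> b \<noteq> z \<and> a \<noteq> b} = m * (m - 1)"
proof -
  let ?X = "X - {z}"
  have eq: "{(a,b). a \<in> X \<and> b \<in> X \<and> a \<noteq> z \<and> b \<noteq> z \<and> a \<noteq> b} = ?X \<times> ?X - (\<lambda>a. (a,a)) ` ?X"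
    by auto
  have "card ((\<lambda>a. (a,a)) ` ?X) = m" using c by (simp add: card_image inj_on_def)
  moreover have "card (?X \<times> ?X) = m * m" using c by (simp add: card_cartesian_product)
  moreover have "(\<lambda>a. (a,a)) ` ?X \<subseteq> ?X \<times> ?X" by auto
  ultimately have "card (?X \<times> ?X - (\<lambda>a. (a,a)) ` ?X) = m * m - m"
    using fin by (simp add: card_Diff_subset finite_subset)
  thus ?thesis unfolding eq by (simp add: diff_mult_distrib2)
qed




theorem theorem2:
  fixes \<alpha> :: "'a::{field,finite}" and n k :: nat
  assumes "prime n"
    and "CARD('a) = 2 ^ n"
    and "(1::'a) + 1 = 0"
    and "primitive_element \<alpha>"
    and "k \<ge> 2"
    and "\<exists>\<S>. card \<S> * ((2 ^ k - 1) * (2 ^ k - 2) * n) = 2 ^ n - 2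
              \<and> (\<forall>X\<in>\<S>. F2_subspace_dim X k \<and> coset_complete n \<alpha> k X)
              \<and> (\<forall>X\<in>\<S>. \<forall>Y\<in>\<S>. X \<noteq> Y \<longrightarrow> coset_diff_set n \<alpha> X \<inter> coset_diff_set n \<alpha> Y = {})"
  shows "\<exists>\<S>::'a set set. steiner_structure k \<S>"
proof -
  note prim = assms(4) and char2 = assms(3) and cardA = assms(2)
  obtain S0 :: "'a set set" where S0all: "card S0 * ((2 ^ k - 1) * (2 ^ k - 2) * n) = 2 ^ n - 2
              \<and> (\<forall>X\<in>S0. F2_subspace_dim X k \<and> coset_complete n \<alpha> k X)
              \<and> (\<forall>X\<in>S0. \<forall>Y\<in>S0. X \<noteq> Y \<longrightarrow> coset_diff_set n \<alpha> X \<inter> coset_diff_set n \<alpha> Y = {})"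
    using assms(6) by (elim exE) 
  have S0card: "card S0 * ((2^k - 1) * (2^k - 2) * n) = 2^n - 2" using S0all by (rule conjunct1)
  have S0X: "F2_subspace_dim X k \<and> coset_complete n \<alpha> k X" if "X \<in> S0" for X
    using S0all that by blast
  have S0disj: "coset_diff_set n \<alpha> X \<inter> coset_diff_set n \<alpha> Y = {}" if "X \<in> S0" "Y \<in> S0" "X \<noteq> Y" for X Y
    using S0all that by blast
  have n0: "n > 0" using assms(1) prime_gt_0_nat by blast
  define N where "N = (2::nat)^n - 1"
  have N0: "N > 0" unfolding N_def using one_less_power[of "2::nat" n] n0 by simp
  have M: "CARD('a) - 1 = N" using cardA N_def by simp
  define L where "L = dlog n \<alpha>"
  have Lnz: "\<alpha>^(L x) = x" "L x < N" if "x \<noteq> 0" for x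
    using dlog_nz[OF prim cardA N_def N0 that] unfolding L_def by auto
  have Lpow: "L (\<alpha>^u) = u mod N" for u unfolding L_def by (rule dlog_pow[OF prim cardA N_def N0])
  have a0: "\<alpha> \<noteq> 0" using prim unfolding primitive_element_def by blast
  have peq: "\<alpha>^u = \<alpha>^v" if "int u mod int N = int v mod int N" for u v
    by (rule pow_eq_int[OF prim M that])
  have peq2: "u mod N = v mod N" if "\<alpha>^u = \<alpha>^v" for u v
    using prim_order(1)[OF prim, of u v] that M by simp
  have powb: "b^(2^j) = \<alpha>^(L b * 2^j)" if "b \<noteq> 0" for b and j :: nat
    using Lnz(1)[OF that] by (metis power_mult)

  define P where "P X = {(a,b). a \<in> X \<and> b \<in> X \<and> a \<noteq> 0 \<and> b \<noteq> 0 \<and> a \<noteq> b}" for X :: "'a set"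
  define h where "h = (\<lambda>(a,b). coset_rep n (nat ((int (L a) - int (L b)) mod int N)))"
  have Dh: "coset_diff_set n \<alpha> X = h ` P X" for X
    unfolding coset_diff_set_def h_def P_def L_def N_def by (auto simp: image_def)
  have cardP: "card (P X) = (2^k - 1) * (2^k - 2)" if "X \<in> S0" for X
  proof -
    have X: "0 \<in> X" "finite X" "card X = 2^k" using S0X[OF that]
      unfolding F2_subspace_dim_def F2_subspace_def by auto
    have "card (X - {0}) = 2^k - 1" using X by (simp add: card_Diff_singleton)
    from card_pairs[OF X(2) this] have "card (P X) = (2^k - 1) * (2^k - 1 - 1)" unfolding P_def .
    thus ?thesis by (metis diff_diff_left one_add_one)
  qed
  have injh: "inj_on h (P X)" if "X \<in> S0" for X
  proof (rule eq_card_imp_inj_on)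
    show "finite (P X)" by simp
    show "card (h ` P X) = card (P X)"
      using S0X[OF that] cardP[OF that] unfolding coset_complete_def Dh by simp
  qed

  define Q where "Q = Sigma S0 (\<lambda>X. P X \<times> {..<n})"
  define G where "G = (\<lambda>(X::'a set, (a,b), j::nat). (2^j * (int (L a) - int (L b))) mod int N)"
  have Gval: "G (X, (a,b), j) = int ((nat ((int (L a) - int (L b)) mod int N) * 2^j) mod N)"
    and hval: "h (a,b) = coset_rep n (nat ((int (L a) - int (L b)) mod int N))" for X a b j
  proof -
    define E where "E = nat ((int (L a) - int (L b)) mod int N)"
    have iE: "int E = (int (L a) - int (L b)) mod int N" unfolding E_def using N0 by simp
    have "G (X, (a,b), j) = (2^j * ((int (L a) - int (L b)) mod int N)) mod int N"
      unfolding G_def by (simp add: mod_mult_right_eq)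
    also have "\<dots> = int ((E * 2^j) mod N)" unfolding iE[symmetric] by (simp add: of_nat_mod mult.commute)
    finally show "G (X, (a,b), j) = int ((nat ((int (L a) - int (L b)) mod int N) * 2^j) mod N)"
      unfolding E_def .
    show "h (a,b) = coset_rep n (nat ((int (L a) - int (L b)) mod int N))" unfolding h_def by simp
  qed
  have Enz: "nat ((int (L a) - int (L b)) mod int N) mod N \<noteq> 0"
    if "a \<noteq> 0" "b \<noteq> 0" "a \<noteq> b" for a b
  proof
    define E where "E = nat ((int (L a) - int (L b)) mod int N)"
    assume "nat ((int (L a) - int (L b)) mod int N) mod N = 0"
    hence Em: "E mod N = 0" unfolding E_def .
    have iE: "int E = (int (L a) - int (L b)) mod int N" unfolding E_def using N0 by simp
    have "int E < int N" unfolding iE using N0 by simp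
    hence "E < N" by simp
    hence "E = 0" using Em by simp
    hence "(int (L a) - int (L b)) mod int N = 0" using iE by simp
    hence "int (L a) mod int N = int (L b) mod int N" by (simp add: mod_eq_dvd_iff dvd_eq_mod_eq_0)
    hence "\<alpha>^(L a) = \<alpha>^(L b)" by (rule peq)
    thus False using Lnz(1)[OF that(1)] Lnz(1)[OF that(2)] that(3) by simp
  qed
  have Qmem: "X \<in> S0" "j < n" "a \<in> X" "b \<in> X" "a \<noteq> 0" "b \<noteq> 0" "a \<noteq> b"
    if "(X, (a,b), j) \<in> Q" for X a b j
    using that unfolding Q_def P_def by auto
  have Gnz: "G q \<noteq> 0" if "q \<in> Q" for q
  proof -
    obtain X a b j where q: "q = (X, (a,b), j)" by (metis prod.exhaust)
    note qm = Qmem[OF that[unfolded q]]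
    define E where "E = nat ((int (L a) - int (L b)) mod int N)"
    have En: "E mod N \<noteq> 0" unfolding E_def by (rule Enz[OF qm(5,6,7)])
    show ?thesis
    proof
      assume "G q = 0"
      hence z: "(E * 2^j) mod N = 0" unfolding q Gval E_def by simp
      have "(E * 2^j * 2^(n-j)) mod N = ((E * 2^j) mod N * 2^(n-j)) mod N" by (rule mod_mult_left_eq[symmetric])
      also have "\<dots> = 0" unfolding z by simp
      finally have "(E * 2^n) mod N = 0" using e1[of j n E] qm(2) by simp
      moreover have "(E * 2^n) mod N = E mod N" using pow2_mod[OF n0, of E n] unfolding N_def by simp
      ultimately show False using En by simp
    qed
  qed
  have GT: "G ` Q \<subseteq> {1..int N - 1}"
  proof
    fix d assume "d \<in> G ` Q"
    then obtain q where q: "q \<in> Q" "d = G q" by blast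
    obtain X a b j where qq: "q = (X, (a,b), j)" by (metis prod.exhaust)
    have "d = int ((nat ((int (L a) - int (L b)) mod int N) * 2^j) mod N)" using q(2) unfolding qq Gval .
    moreover have "d \<noteq> 0" using Gnz[OF q(1)] q(2) by simp
    moreover have "(nat ((int (L a) - int (L b)) mod int N) * 2^j) mod N < N" using N0 by simp
    ultimately show "d \<in> {1..int N - 1}" by auto
  qed
  have Ginj: "inj_on G Q"
  proof (rule inj_onI)
    fix q q' assume q: "q \<in> Q" and q': "q' \<in> Q" and eq: "G q = G q'"
    obtain X a b j where qq: "q = (X, (a,b), j)" by (metis prod.exhaust)
    obtain X' a' b' j' where qq': "q' = (X', (a',b'), j')" by (metis prod.exhaust)
    note m = Qmem[OF q[unfolded qq]] and m' = Qmem[OF q'[unfolded qq']]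
    define E where "E = nat ((int (L a) - int (L b)) mod int N)"
    define E' where "E' = nat ((int (L a') - int (L b')) mod int N)"
    have "int ((E * 2^j) mod N) = int ((E' * 2^j') mod N)"
      using eq unfolding qq qq' Gval E_def E'_def .
    hence eqN: "(E * 2^j) mod N = (E' * 2^j') mod N" by (simp only: of_nat_eq_iff)
    hence eqm: "(E * 2^j) mod (2^n - 1) = (E' * 2^j') mod (2^n - 1)" unfolding N_def .
    have hh: "h (a,b) = h (a',b')"
      unfolding hval E_def[symmetric] E'_def[symmetric]
      using rep_shift[OF n0, of E j] rep_shift[OF n0, of E' j'] eqm by simp
    have inP: "(a,b) \<in> P X" "(a',b') \<in> P X'" using m m' unfolding P_def by auto
    have XX: "X = X'"
    proof (rule ccontr)
      assume "X \<noteq> X'"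
      hence "coset_diff_set n \<alpha> X \<inter> coset_diff_set n \<alpha> X' = {}" using S0disj m(1) m'(1) by blast
      moreover have "h (a,b) \<in> coset_diff_set n \<alpha> X" unfolding Dh using inP(1) by blast
      moreover have "h (a,b) \<in> coset_diff_set n \<alpha> X'" unfolding Dh hh using inP(2) by blast
      ultimately show False by blast
    qed
    have ab: "(a,b) = (a',b')" using inj_onD[OF injh[OF m(1)] hh inP(1)] inP(2) XX by simp
    hence EE: "E' = E" unfolding E_def E'_def by simp
    have "E mod (2^n - 1) \<noteq> 0" using Enz[OF m(5,6,7)] unfolding E_def N_def .
    hence "j = j'" using shift_inj[OF assms(1) _ m(2) m'(2)] eqm unfolding EE by blast
    thus "q = q'" unfolding qq qq' using XX ab by simp
  qed
  have finS0: "finite S0" by simp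
  have cardQ: "card Q = N - 1"
  proof -
    have "card Q = (\<Sum>X\<in>S0. card (P X \<times> {..<n}))" unfolding Q_def by (rule card_SigmaI) simp_all
    also have "\<dots> = (\<Sum>X\<in>S0. (2^k - 1) * (2^k - 2) * n)"
      by (rule sum.cong) (simp_all add: card_cartesian_product cardP)
    also have "\<dots> = card S0 * ((2^k - 1) * (2^k - 2) * n)" by simp
    also have "\<dots> = N - 1" unfolding S0card N_def by simp
    finally show ?thesis .
  qed
  have GQ: "G ` Q = {1..int N - 1}"
  proof (rule card_subset_eq)
    show "finite {1..int N - 1}" by simp
    show "G ` Q \<subseteq> {1..int N - 1}" by (rule GT)
    have "card (G ` Q) = N - 1" using card_image[OF Ginj] cardQ by simp
    thus "card (G ` Q) = card {1..int N - 1}" using N0 by simp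
  qed

  define Tr where "Tr X i j = (\<lambda>z. \<alpha>^i * z^(2^j)) ` X" for X and i j :: nat
  define SS where "SS = {Tr X i j | X i j. X \<in> S0 \<and> j < n}"
  have Trsp: "F2_subspace (Tr X i j)" if "X \<in> S0" for X i j
  proof -
    have X: "0 \<in> X" "\<And>a b. a \<in> X \<Longrightarrow> b \<in> X \<Longrightarrow> a + b \<in> X"
      using S0X[OF that] unfolding F2_subspace_dim_def F2_subspace_def by auto
    show ?thesis unfolding F2_subspace_def
    proof (intro conjI ballI)
      show "0 \<in> Tr X i j" unfolding Tr_def using X(1) by (auto intro!: image_eqI[of _ _ 0])
      fix x y assume "x \<in> Tr X i j" "y \<in> Tr X i j"
      then obtain a b where "a \<in> X" "b \<in> X" "x = \<alpha>^i * a^(2^j)" "y = \<alpha>^i * b^(2^j)"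
        unfolding Tr_def by blast
      hence "x + y = \<alpha>^i * (a + b)^(2^j)" "a + b \<in> X"
        using X(2) by (simp_all add: frob[OF char2] distrib_left)
      thus "x + y \<in> Tr X i j" unfolding Tr_def by blast
    qed
  qed
  have Trdim: "F2_subspace_dim (Tr X i j) k" if "X \<in> S0" for X i j
  proof -
    have cX: "card X = 2^k" using S0X[OF that] unfolding F2_subspace_dim_def by auto
    have "inj_on (\<lambda>z. \<alpha>^i * z^(2^j)) X"
    proof (rule inj_onI)
      fix u v assume "\<alpha>^i * u^(2^j) = \<alpha>^i * v^(2^j)"
      hence "u^(2^j) = v^(2^j)" using a0 by simp
      thus "u = v" by (rule frob_inj[OF char2])
    qed
    hence "card (Tr X i j) = 2^k" unfolding Tr_def using card_image cX by metis
    thus ?thesis using Trsp[OF that] unfolding F2_subspace_dim_def by simp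
  qed
  have mem: "\<exists>a b. (X, (a,b), j) \<in> Q \<and> G (X, (a,b), j) = (int (L y) - int (L x)) mod int N
               \<and> x = \<alpha>^i * b^(2^j)"
    if X: "X \<in> S0" and j: "j < n" and xy: "x \<in> Tr X i j" "y \<in> Tr X i j" "x \<noteq> 0" "y \<noteq> 0" "x \<noteq> y"
    for X i j x y
  proof -
    obtain b where b: "b \<in> X" "x = \<alpha>^i * b^(2^j)" using xy(1) unfolding Tr_def by blast
    obtain a where a: "a \<in> X" "y = \<alpha>^i * a^(2^j)" using xy(2) unfolding Tr_def by blast
    have b0: "b \<noteq> 0" using b xy(3) by auto
    have a0': "a \<noteq> 0" using a xy(4) by auto
    have ab: "a \<noteq> b" using a b xy(5) by auto
    have hx: "x = \<alpha>^(i + L b * 2^j)" using b(2) powb[OF b0, of j] by (simp add: power_add)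
    have hy: "y = \<alpha>^(i + L a * 2^j)" using a(2) powb[OF a0', of j] by (simp add: power_add)
    have Lx: "int (L x) = (int i + int (L b) * 2^j) mod int N"
      unfolding hx Lpow by (simp add: of_nat_mod)
    have Ly: "int (L y) = (int i + int (L a) * 2^j) mod int N"
      unfolding hy Lpow by (simp add: of_nat_mod)
    have "(int (L y) - int (L x)) mod int N = ((int i + int (L a) * 2^j) - (int i + int (L b) * 2^j)) mod int N"
      unfolding Lx Ly by (rule mod_diff_eq)
    also have "\<dots> = G (X, (a,b), j)" unfolding G_def by (simp add: algebra_simps)
    finally have "G (X, (a,b), j) = (int (L y) - int (L x)) mod int N" by simp
    moreover have "(X, (a,b), j) \<in> Q" unfolding Q_def P_def using X j a b a0' b0 ab by auto
    ultimately show ?thesis using b(2) by blast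
  qed

  show ?thesis
  proof (intro exI[of _ SS], unfold steiner_structure_def, intro conjI ballI allI impI)
    fix Y assume "Y \<in> SS"
    thus "F2_subspace_dim Y k" unfolding SS_def using Trdim by blast
  next
    fix W :: "'a set" assume W: "F2_subspace_dim W 2"
    obtain x y where xy: "x \<in> W" "y \<in> W" "x \<noteq> 0" "y \<noteq> 0" "x \<noteq> y"
      and clo: "\<And>Y. F2_subspace Y \<Longrightarrow> x \<in> Y \<Longrightarrow> y \<in> Y \<Longrightarrow> W \<subseteq> Y"
      using W_decomp[OF char2 W] by blast
    define d where "d = (int (L y) - int (L x)) mod int N"
    show "\<exists>!Y. Y \<in> SS \<and> W \<subseteq> Y"
    proof (rule ex_ex1I)
      have "d \<noteq> 0"
      proof
        assume "d = 0"
        hence "int (L y) mod int N = int (L x) mod int N" unfolding d_def by (simp add: mod_eq_dvd_iff dvd_eq_mod_eq_0)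
        hence "\<alpha>^(L y) = \<alpha>^(L x)" by (rule peq)
        thus False using Lnz(1)[OF xy(3)] Lnz(1)[OF xy(4)] xy(5) by simp
      qed
      moreover have "0 \<le> d" "d < int N" unfolding d_def using N0 by simp_all
      ultimately have "d \<in> {1..int N - 1}" by simp
      then obtain q where q: "q \<in> Q" "G q = d" unfolding GQ[symmetric] by blast
      obtain X a b j where qq: "q = (X, (a,b), j)" by (metis prod.exhaust)
      note m = Qmem[OF q(1)[unfolded qq]]
      define i where "i = nat ((int (L x) - 2^j * int (L b)) mod int N)"
      have ii: "int i = (int (L x) - 2^j * int (L b)) mod int N" unfolding i_def using N0 by simp
      have "\<alpha>^i * b^(2^j) = \<alpha>^(i + L b * 2^j)" using powb[OF m(6), of j] by (simp add: power_add)
      also have "\<dots> = \<alpha>^(L x)"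
      proof (rule peq)
        have "int (i + L b * 2^j) mod int N = ((int (L x) - 2^j * int (L b)) mod int N + int (L b) * 2^j) mod int N"
          by (simp add: ii)
        also have "\<dots> = (int (L x) - 2^j * int (L b) + int (L b) * 2^j) mod int N" by (rule mod_add_left_eq)
        also have "\<dots> = int (L x) mod int N" by simp
        finally show "int (i + L b * 2^j) mod int N = int (L x) mod int N" .
      qed
      also have "\<dots> = x" by (rule Lnz(1)[OF xy(3)])
      finally have xin: "x \<in> Tr X i j" unfolding Tr_def using m(4) by (auto intro!: image_eqI[of _ _ b])
      have "\<alpha>^i * a^(2^j) = \<alpha>^(i + L a * 2^j)" using powb[OF m(5), of j] by (simp add: power_add)
      also have "\<dots> = \<alpha>^(L y)"
      proof (rule peq)
        have Gd: "(2^j * (int (L a) - int (L b))) mod int N = d" using q(2) unfolding qq G_def by simp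
        have "int (i + L a * 2^j) mod int N = ((int (L x) - 2^j * int (L b)) mod int N + int (L a) * 2^j) mod int N"
          by (simp add: ii)
        also have "\<dots> = (int (L x) - 2^j * int (L b) + int (L a) * 2^j) mod int N" by (rule mod_add_left_eq)
        also have "\<dots> = (int (L x) + 2^j * (int (L a) - int (L b))) mod int N" by (simp add: algebra_simps)
        also have "\<dots> = (int (L x) + (2^j * (int (L a) - int (L b))) mod int N) mod int N" by (rule mod_add_right_eq[symmetric])
        also have "\<dots> = (int (L x) + (int (L y) - int (L x)) mod int N) mod int N" unfolding Gd d_def ..
        also have "\<dots> = (int (L x) + (int (L y) - int (L x))) mod int N" by (rule mod_add_right_eq)
        also have "\<dots> = int (L y) mod int N" by simp
        finally show "int (i + L a * 2^j) mod int N = int (L y) mod int N" .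
      qed
      also have "\<dots> = y" by (rule Lnz(1)[OF xy(4)])
      finally have yin: "y \<in> Tr X i j" unfolding Tr_def using m(3) by (auto intro!: image_eqI[of _ _ a])
      have "Tr X i j \<in> SS" unfolding SS_def using m(1,2) by blast
      moreover have "W \<subseteq> Tr X i j" using clo[OF Trsp[OF m(1)] xin yin] .
      ultimately show "\<exists>Y. Y \<in> SS \<and> W \<subseteq> Y" by blast
    next
      fix Y1 Y2 assume Y1: "Y1 \<in> SS \<and> W \<subseteq> Y1" and Y2: "Y2 \<in> SS \<and> W \<subseteq> Y2"
      obtain X1 i1 j1 where T1: "Y1 = Tr X1 i1 j1" "X1 \<in> S0" "j1 < n" using Y1 unfolding SS_def by blast
      obtain X2 i2 j2 where T2: "Y2 = Tr X2 i2 j2" "X2 \<in> S0" "j2 < n" using Y2 unfolding SS_def by blast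
      have in1: "x \<in> Tr X1 i1 j1" "y \<in> Tr X1 i1 j1" using Y1 T1 xy by auto
      have in2: "x \<in> Tr X2 i2 j2" "y \<in> Tr X2 i2 j2" using Y2 T2 xy by auto
      obtain a1 b1 where r1: "(X1, (a1,b1), j1) \<in> Q" "G (X1, (a1,b1), j1) = d" "x = \<alpha>^i1 * b1^(2^j1)"
        using mem[OF T1(2,3) in1 xy(3,4,5)] unfolding d_def by blast
      obtain a2 b2 where r2: "(X2, (a2,b2), j2) \<in> Q" "G (X2, (a2,b2), j2) = d" "x = \<alpha>^i2 * b2^(2^j2)"
        using mem[OF T2(2,3) in2 xy(3,4,5)] unfolding d_def by blast
      have "(X1, (a1,b1), j1) = (X2, (a2,b2), j2)"
        using inj_onD[OF Ginj _ r1(1) r2(1)] r1(2) r2(2) by simp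
      hence e: "X1 = X2" "b1 = b2" "j1 = j2" by auto
      have "b1 \<noteq> 0" using Qmem[OF r1(1)] by simp
      hence "b1^(2^j1) \<noteq> 0" by simp
      moreover have "\<alpha>^i1 * b1^(2^j1) = \<alpha>^i2 * b1^(2^j1)" using trans[OF r1(3)[symmetric] r2(3)] unfolding e .
      ultimately have "\<alpha>^i1 = \<alpha>^i2" by simp
      thus "Y1 = Y2" unfolding T1(1) T2(1) Tr_def e by simp
    qed
  qed
qed


end
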